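(* Let $d\ge 2$ and $x\in[-1,1]$, and let $\rho^{AC}$ be the state on $\mathcal{H}^A\otimes\mathcal{H}^C$ defined in the context. For $r=1,\dots,d$ define the vectors $|\mu^{(r)}_k\rangle\in\mathcal{H}^C$, $k=1,\dots,d$, by $|\mu^{(r)}_r\rangle=|\mu^{(+)}_{rr}\rangle$, $|\mu^{(r)}_k\rangle=\frac{1}{\sqrt2}\big(|\mu^{(+)}_{kr}\rangle+|\mu^{(-)}_{kr}\rangle\big)$ for $k<r$, and $|\mu^{(r)}_k\rangle=\frac{1}{\sqrt2}\big(|\mu^{(+)}_{rk}\rangle-|\mu^{(-)}_{rk}\rangle\big)$ for $k>r$, and the maximally entangled states $$|\Psi^{\max}_r\rangle=\frac{1}{\sqrt d}\sum_{k=1}^d |k\rangle\otimes|\mu^{(r)}_k\rangle,\qquad r=1,\dots,d.$$ (The family $\{|\mu^{(r)}_k\rangle\}_{r,k}$ is an orthonormal basis of $\mathcal{H}^C$.) Then the set of maximally entangled states that attains the maximum in the definition of the fully entangled fraction of $\rho^{AC}$ is $\{|\Psi^{\max}_r\rangle\}_{r=1}^d$, i.e. $$\mathcal{F}(\rho^{AC})=\sum_{r=1}^d\langle\Psi^{\max}_r|\rho^{AC}|\Psi^{\max}_r\rangle .$$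
   Context: Let $\mathcal{H}^A=\mathbb{C}^d$ with orthonormal basis $\{|1\rangle,\dots,|d\rangle\}$ and let $\mathcal{H}^C=\mathbb{C}^{d^2}$ with orthonormal basis $\{|\mu^{(+)}_{kl}\rangle\}_{1\le k\le l\le d}\cup\{|\mu^{(-)}_{kl}\rangle\}_{1\le k<l\le d}$. For $x\in[-1,1]$ put $\lambda_\pm=\frac{1\pm x}{d(d\pm1)}$, and let $\alpha,\theta\in[0,\pi/2]$ be defined by $\cos\alpha=\sqrt{d\lambda_+}$ and $\cos\theta=\sqrt{\lambda_+/(\lambda_++\lambda_-)}$. For $r=1,\dots,d$ let $$|\Psi_r\rangle=\cos\alpha\,|r\rangle|\mu^{(+)}_{rr}\rangle+\frac{\sin\alpha}{\sqrt{d-1}}\sum_{k=1}^{r-1}|k\rangle\big(\cos\theta|\mu^{(+)}_{kr}\rangle+\sin\theta|\mu^{(-)}_{kr}\rangle\big)+\frac{\sin\alpha}{\sqrt{d-1}}\sum_{k=r+1}^{d}|k\rangle\big(\cos\theta|\mu^{(+)}_{rk}\rangle-\sin\theta|\mu^{(-)}_{rk}\rangle\big),$$ and $\rho^{AC}=\frac1d\sum_{r=1}^d|\Psi_r\rangle\langle\Psi_r|$. (This $\rho^{AC}$ is obtained by tracing out $B$ from a purification on $\mathcal{H}^A\otimes\mathcal{H}^B\otimes\mathcal{H}^C$ of the $d\otimes d$ Werner state $\rho_{\mathrm w}^{AB}=\frac{d-x}{d^3-d}\mathbb{I}+\frac{dx-1}{d^3-d}F$, $F$ the swap.) Fully entangled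 fraction: for a state $\rho$ on $\mathbb{C}^d\otimes\mathbb{C}^{d^2}$ (so $d^2=Kd$ with $K=d$), fix an orthonormal basis $\{|e_m\rangle\}_{m=1}^{d^2}$ of the second factor and set $|\psi^{\max}_i\rangle=\frac1{\sqrt d}\sum_{j=1}^d|j\rangle\otimes|e_{j+(i-1)d}\rangle$, $i=1,\dots,d$; then $\mathcal{F}(\rho)=\max_{V}\sum_{i=1}^{d}\langle\psi^{\max}_i|(\mathbb{I}\otimes V)\rho(\mathbb{I}\otimes V^\dagger)|\psi^{\max}_i\rangle$, the maximum over all unitaries $V$ on the second factor. *)

theory Defs
  imports Complex_Main
begin

text \<open>Labels of the orthonormal basis of H^C = C^(d^2):
  (True,k,l) stands for mu^(+)_kl (1 <= k <= l <= d),
  (False,k,l) stands for mu^(-)_kl (1 <= k < l <= d).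
  Vectors of H^C are functions label => complex (only values on CLabels d matter);
  vectors of H^A (x) H^C are functions nat => label => complex, first index in {1..d}.\<close>

type_synonym label = "bool \<times> nat \<times> nat"

definition CLabels :: "nat \<Rightarrow> label set" where
  "CLabels d = {(True,k,l) | k l. 1 \<le> k \<and> k \<le> l \<and> l \<le> d}
             \<union> {(False,k,l) | k l. 1 \<le> k \<and> k < l \<and> l \<le> d}"

definition lam_plus :: "nat \<Rightarrow> real \<Rightarrow> real" where
  "lam_plus d x = (1 + x) / (real d * (real d + 1))"

definition lam_minus :: "nat \<Rightarrow> real \<Rightarrow> real" where
  "lam_minus d x = (1 - x) / (real d * (real d - 1))"

definition alpha_ang :: "nat \<Rightarrow> real \<Rightarrow> real" where
  "alpha_ang d x = arccos (sqrt (real d * lam_plus d x))"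

definition theta_ang :: "nat \<Rightarrow> real \<Rightarrow> real" where
  "theta_ang d x = arccos (sqrt (lam_plus d x / (lam_plus d x + lam_minus d x)))"

definition basis_vec :: "label \<Rightarrow> label \<Rightarrow> complex" where
  "basis_vec l c = (if c = l then 1 else 0)"

definition Psi :: "nat \<Rightarrow> real \<Rightarrow> nat \<Rightarrow> nat \<Rightarrow> label \<Rightarrow> complex" where
  "Psi d x r a c =
    (let ca = complex_of_real (cos (alpha_ang d x));
         sa = complex_of_real (sin (alpha_ang d x) / sqrt (real d - 1));
         ct = complex_of_real (cos (theta_ang d x));
         st = complex_of_real (sin (theta_ang d x))
     in if a = r then ca * basis_vec (True,r,r) c
        else if 1 \<le> a \<and> a < r then sa * (ct * basis_vec (True,a,r) c + st * basis_vec (False,a,r) c)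
        else if r < a \<and> a \<le> d then sa * (ct * basis_vec (True,r,a) c - st * basis_vec (False,r,a) c)
        else 0)"

definition rhoAC :: "nat \<Rightarrow> real \<Rightarrow> (nat \<times> label) \<Rightarrow> (nat \<times> label) \<Rightarrow> complex" where
  "rhoAC d x p q = (1 / of_nat d) * (\<Sum>r\<in>{1..d}. Psi d x r (fst p) (snd p) * cnj (Psi d x r (fst q) (snd q)))"

definition expect :: "nat \<Rightarrow> ((nat \<times> label) \<Rightarrow> (nat \<times> label) \<Rightarrow> complex) \<Rightarrow> (nat \<Rightarrow> label \<Rightarrow> complex) \<Rightarrow> complex" where
  "expect d M psi = (\<Sum>p\<in>{1..d} \<times> CLabels d. \<Sum>q\<in>{1..d} \<times> CLabels d.
       cnj (psi (fst p) (snd p)) * M p q * psi (fst q) (snd q))"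

definition unitary_C :: "nat \<Rightarrow> (label \<Rightarrow> label \<Rightarrow> complex) \<Rightarrow> bool" where
  "unitary_C d V \<longleftrightarrow>
     (\<forall>a\<in>CLabels d. \<forall>b\<in>CLabels d.
        (\<Sum>m\<in>CLabels d. cnj (V m a) * V m b) = (if a = b then 1 else 0)) \<and>
     (\<forall>a\<in>CLabels d. \<forall>b\<in>CLabels d.
        (\<Sum>m\<in>CLabels d. V a m * cnj (V b m)) = (if a = b then 1 else 0))"

definition conj_IV :: "nat \<Rightarrow> (label \<Rightarrow> label \<Rightarrow> complex) \<Rightarrow> ((nat \<times> label) \<Rightarrow> (nat \<times> label) \<Rightarrow> complex)
     \<Rightarrow> (nat \<times> label) \<Rightarrow> (nat \<times> label) \<Rightarrow> complex" where
  "conj_IV d V M p q = (\<Sum>c1\<in>CLabels d. \<Sum>c2\<in>CLabels d.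
      V (snd p) c1 * M (fst p, c1) (fst q, c2) * cnj (V (snd q) c2))"

definition onb_C :: "nat \<Rightarrow> (nat \<Rightarrow> label \<Rightarrow> complex) \<Rightarrow> bool" where
  "onb_C d e \<longleftrightarrow> (\<forall>m\<in>{1..d^2}. \<forall>n\<in>{1..d^2}.
      (\<Sum>c\<in>CLabels d. cnj (e m c) * e n c) = (if m = n then 1 else 0))"

definition psi_max :: "nat \<Rightarrow> (nat \<Rightarrow> label \<Rightarrow> complex) \<Rightarrow> nat \<Rightarrow> nat \<Rightarrow> label \<Rightarrow> complex" where
  "psi_max d e i j c = (if 1 \<le> j \<and> j \<le> d then complex_of_real (1 / sqrt (real d)) * e (j + (i - 1) * d) c else 0)"

definition FEF :: "nat \<Rightarrow> (nat \<Rightarrow> label \<Rightarrow> complex) \<Rightarrow> ((nat \<times> label) \<Rightarrow> (nat \<times> label) \<Rightarrow> complex) \<Rightarrow> real" where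
  "FEF d e M = (SUP V \<in> {V. unitary_C d V}.
      Re (\<Sum>i\<in>{1..d}. expect d (conj_IV d V M) (psi_max d e i)))"

definition mu_r :: "nat \<Rightarrow> nat \<Rightarrow> label \<Rightarrow> complex" where
  "mu_r r k c =
     (if k = r then basis_vec (True,r,r) c
      else if k < r then complex_of_real (1 / sqrt 2) * (basis_vec (True,k,r) c + basis_vec (False,k,r) c)
      else complex_of_real (1 / sqrt 2) * (basis_vec (True,r,k) c - basis_vec (False,r,k) c))"

definition Psi_max :: "nat \<Rightarrow> nat \<Rightarrow> nat \<Rightarrow> label \<Rightarrow> complex" where
  "Psi_max d r a c = (if 1 \<le> a \<and> a \<le> d then complex_of_real (1 / sqrt (real d)) * mu_r r a c else 0)"

end

theory Submission
  imports Defs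
begin



lemma divdiv: "(D::real) \<noteq> 0 \<Longrightarrow> a / D / (b / D) = a / b"
  by (cases "b = 0") (simp_all add: field_simps)

lemma trig:
  assumes d2: "d \<ge> 2" and x1: "-1 \<le> x" and x2: "x \<le> 1"
  shows "cos (alpha_ang d x) = sqrt 2 * (sin (alpha_ang d x) / sqrt (real d - 1)) * cos (theta_ang d x)"
    and "cos (alpha_ang d x) \<ge> 0" and "sin (alpha_ang d x) \<ge> 0" and "sin (theta_ang d x) \<ge> 0"
    and "cos (alpha_ang d x) = 0 \<Longrightarrow> sin (alpha_ang d x) = 1 \<and> sin (theta_ang d x) = 1"
proof -
  have dr: "real d \<ge> 2" using d2 by simp
  have dp: "real d > 0" "real d + 1 > 0" "real d - 1 > 0" using dr by auto
  have nz: "real d \<noteq> 0" "real d + 1 \<noteq> 0" "real d - 1 \<noteq> 0" using dp by auto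
  define u where "u = (1 + x) / (real d + 1)"
  have ueq: "real d * lam_plus d x = u" unfolding u_def lam_plus_def using dp by simp
  have u0: "0 \<le> u" and u1: "u \<le> 1" unfolding u_def using dr x1 x2 by (auto simp: field_simps)
  have ca: "cos (alpha_ang d x) = sqrt u" unfolding alpha_ang_def ueq using u0 u1 by (subst cos_arccos) (auto intro: order.trans[of _ 0])
  have sa: "sin (alpha_ang d x) = sqrt (1 - u)" unfolding alpha_ang_def ueq using u0 u1 by (subst sin_arccos) (auto intro: order.trans[of _ 0])
  define v where "v = lam_plus d x / (lam_plus d x + lam_minus d x)"
  have e1: "lam_plus d x = (1+x)*(real d - 1) / (real d*(real d+1)*(real d-1))" unfolding lam_plus_def using nz by simp
  have e2: "lam_minus d x = (1-x)*(real d + 1) / (real d*(real d+1)*(real d-1))" unfolding lam_minus_def using nz by simp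
  have lsum: "lam_plus d x + lam_minus d x = 2 * (real d - x) / (real d * (real d + 1) * (real d - 1))"
  proof -
    have "(1+x)*(real d - 1) + (1-x)*(real d + 1) = 2 * (real d - x)" by (simp add: algebra_simps)
    thus ?thesis unfolding e1 e2 add_divide_distrib[symmetric] by simp
  qed
  have dx: "real d - x > 0" using dr x2 by simp
  have veq: "v = (1 + x) * (real d - 1) / (2 * (real d - x))"
    unfolding v_def lsum unfolding e1 by (rule divdiv) (use nz in simp)
  have v0: "0 \<le> v" unfolding veq using dr dx x1 by simp
  have hx: "x * (real d + 1) \<le> 1 * (real d + 1)" by (rule mult_right_mono) (use x2 dp in auto)
  have v1: "v \<le> 1" unfolding veq using dx hx by (simp add: divide_le_eq algebra_simps)
  have ct: "cos (theta_ang d x) = sqrt v" unfolding theta_ang_def v_def[symmetric] using v0 v1 by (subst cos_arccos) (auto intro: order.trans[of _ 0])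
  have st: "sin (theta_ang d x) = sqrt (1 - v)" unfolding theta_ang_def v_def[symmetric] using v0 v1 by (subst sin_arccos) (auto intro: order.trans[of _ 0])
  have key: "2 * (1 - u) * v / (real d - 1) = u"
  proof -
    have omu: "1 - u = (real d - x)/(real d + 1)" unfolding u_def using nz by (simp add: field_simps)
    have dxn: "real d - x \<noteq> 0" using dx by simp
    have gen: "\<And>A B C E::real. A \<noteq> 0 \<Longrightarrow> B \<noteq> 0 \<Longrightarrow> E \<noteq> 0 \<Longrightarrow> 2*(A/B)*(C*E/(2*A))/E = C/B"
      by (simp add: field_simps)
    show ?thesis unfolding omu veq unfolding u_def by (rule gen) (use nz dxn in auto)
  qed
  have "sqrt 2 * (sqrt (1 - u) / sqrt (real d - 1)) * sqrt v = sqrt (2 * (1 - u) * v / (real d - 1))"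
    by (simp only: real_sqrt_mult real_sqrt_divide) (simp add: mult_ac)
  also have "\<dots> = sqrt u" using key by simp
  finally show "cos (alpha_ang d x) = sqrt 2 * (sin (alpha_ang d x) / sqrt (real d - 1)) * cos (theta_ang d x)"
    using ca sa ct by simp
  show "cos (alpha_ang d x) \<ge> 0" using ca u0 by simp
  show "sin (alpha_ang d x) \<ge> 0" using sa u1 by simp
  show "sin (theta_ang d x) \<ge> 0" using st v1 by simp
  assume "cos (alpha_ang d x) = 0"
  hence "u = 0" using ca u0 by simp
  hence "v = 0" unfolding veq using u_def dr by (simp add: u_def)
  show "sin (alpha_ang d x) = 1 \<and> sin (theta_ang d x) = 1" using sa st \<open>u = 0\<close> \<open>v = 0\<close> by simp
qed



definition ind :: "label \<Rightarrow> label \<Rightarrow> real" where "ind l c = (if c = l then 1 else 0)"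

definition mr :: "nat \<Rightarrow> nat \<Rightarrow> label \<Rightarrow> real" where
 "mr r k c = (if k = r then ind (True,r,r) c
    else if k < r then (1/sqrt 2) * (ind (True,k,r) c + ind (False,k,r) c)
    else (1/sqrt 2) * (ind (True,r,k) c - ind (False,r,k) c))"

lemma mu_r_eq: "mu_r r k c = complex_of_real (mr r k c)"
  unfolding mu_r_def mr_def ind_def basis_vec_def by simp

definition kap :: "real \<Rightarrow> real \<Rightarrow> label \<Rightarrow> real" where
  "kap kp km c = (if fst c then kp else km)"

lemma finite_CLabels: "finite (CLabels d)"
proof -
  have "CLabels d \<subseteq> UNIV \<times> {0..d} \<times> {0..d}" unfolding CLabels_def by auto
  thus ?thesis by (rule finite_subset) auto
qed

lemma sum_ind: "finite C \<Longrightarrow> (\<Sum>c\<in>C. g c * ind l c) = (if l \<in> C then g l else 0)"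
  unfolding ind_def by (simp add: if_distrib cong: if_cong)

lemma mr_two: "mr r k c = (if k = r then 1 else 1/sqrt 2) * ind (True, min r k, max r k) c
   + (if k = r then 0 else if k < r then 1/sqrt 2 else - (1/sqrt 2)) * ind (False, min r k, max r k) c"
  unfolding mr_def by (auto simp: min_def max_def algebra_simps)

lemma sum_two:
  assumes "finite C"
  shows "(\<Sum>c\<in>C. g c * (p1 * ind (True,u) c + p2 * ind (False,u) c) * (q1 * ind (True,v) c + q2 * ind (False,v) c))
     = (if u = v then (if (True,u) \<in> C then g (True,u) * p1 * q1 else 0) + (if (False,u) \<in> C then g (False,u) * p2 * q2 else 0) else 0)"
proof -
  have "(\<Sum>c\<in>C. g c * (p1 * ind (True,u) c + p2 * ind (False,u) c) * (q1 * ind (True,v) c + q2 * ind (False,v) c))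
     = (\<Sum>c\<in>C. (if u = v then g c * p1 * q1 else 0) * ind (True,u) c) + (\<Sum>c\<in>C. (if u = v then g c * p2 * q2 else 0) * ind (False,u) c)"
    by (subst sum.distrib[symmetric], rule sum.cong) (auto simp: ind_def)
  also have "\<dots> = (if u = v then (if (True,u) \<in> C then g (True,u) * p1 * q1 else 0) + (if (False,u) \<in> C then g (False,u) * p2 * q2 else 0) else 0)"
    by (simp add: sum_ind[OF assms])
  finally show ?thesis .
qed

lemma mem_T: "i \<in> {1..d} \<Longrightarrow> a \<in> {1..d} \<Longrightarrow> (True, min i a, max i a) \<in> CLabels d"
  unfolding CLabels_def by auto
lemma mem_F: "i \<in> {1..d} \<Longrightarrow> a \<in> {1..d} \<Longrightarrow> (False, min i a, max i a) \<in> CLabels d \<longleftrightarrow> i \<noteq> a"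
  unfolding CLabels_def by (auto simp: min_def max_def)

lemma L2:
  assumes "i \<in> {1..d}" "a \<in> {1..d}" "j \<in> {1..d}" "a' \<in> {1..d}"
  shows "(\<Sum>c\<in>CLabels d. kap kp km c * mr i a c * mr j a' c) =
    (if i = j \<and> a = a' then (if i = a then kp else (kp+km)/2)
     else if i = a' \<and> a = j then (kp - km)/2 else 0)"
proof -
  have "(\<Sum>c\<in>CLabels d. kap kp km c * mr i a c * mr j a' c) =
    (if (min i a, max i a) = (min j a', max j a') then kp * (if a = i then 1 else 1/sqrt 2) * (if a' = j then 1 else 1/sqrt 2)
       + (if i \<noteq> a then km * (if a = i then 0 else if a < i then 1/sqrt 2 else - (1/sqrt 2)) * (if a' = j then 0 else if a' < j then 1/sqrt 2 else - (1/sqrt 2)) else 0) else 0)"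
    unfolding mr_two[of i a] mr_two[of j a']
    apply (subst sum_two[OF finite_CLabels])
    apply (simp only: mem_T[OF assms(1,2)] mem_F[OF assms(1,2)] if_True kap_def fst_conv)
    by (simp add: eq_commute[of a i] eq_commute[of a' j])
  also have "\<dots> = (if i = j \<and> a = a' then (if i = a then kp else (kp+km)/2)
     else if i = a' \<and> a = j then (kp - km)/2 else 0)"
  proof -
    have h2: "1/sqrt 2 * (1/sqrt 2) = (1/2::real)" by (simp add: real_sqrt_mult[symmetric])
    have P: "(min i a, max i a) = (min j a', max j a') \<longleftrightarrow> (i = j \<and> a = a') \<or> (i = a' \<and> a = j)"
      by (auto simp: min_def max_def)
    show ?thesis
    proof (cases "i = j \<and> a = a'")
      case True
      then show ?thesis using h2 by (cases "i = a"; cases "a < i") (simp_all add: algebra_simps add_divide_distrib)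
    next
      case False
      note F = this
      show ?thesis
      proof (cases "i = a' \<and> a = j")
        case True
        then have "i \<noteq> a" using F by auto
        then show ?thesis using True F h2 by (cases "a < i") (simp_all add: algebra_simps diff_divide_distrib)
      next
        case False
        have "\<not> ((min i a, max i a) = (min j a', max j a'))" using F False P by blast
        then show ?thesis using F False by (simp only: if_False)
      qed
    qed
  qed
  finally show ?thesis .
qed



lemma expect_conj:
  fixes s :: complex
  assumes fin: "finite R"
  shows "expect d (conj_IV d V (\<lambda>p q. s * (\<Sum>r\<in>R. f r (fst p) (snd p) * cnj (f r (fst q) (snd q))))) \<psi>
   = s * (\<Sum>r\<in>R. (\<Sum>p\<in>{1..d} \<times> CLabels d. cnj (\<psi> (fst p) (snd p)) * (\<Sum>c1\<in>CLabels d. V (snd p) c1 * f r (fst p) c1))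
       * cnj (\<Sum>p\<in>{1..d} \<times> CLabels d. cnj (\<psi> (fst p) (snd p)) * (\<Sum>c1\<in>CLabels d. V (snd p) c1 * f r (fst p) c1)))"
  unfolding expect_def conj_IV_def
  apply (simp add: sum_product sum_distrib_left sum_distrib_right cnj_sum sum.swap[where A=R] mult_ac)
  apply (rule trans[OF _ sum.swap])
  apply (rule sum.cong[OF refl], rule sum.cong[OF refl])
  apply (rule trans[OF _ sum.swap])
  apply (simp add: mult_ac)
  done



lemma amgm_pt:
  fixes w h k b :: real
  assumes "k \<ge> 0" "b > 0"
  shows "k * w * h \<le> (b * (k * w^2) + (k * h^2) / b) / 2"
proof -
  have "0 \<le> (b * w - h)^2" by simp
  hence "2 * w * h \<le> b * w^2 + h^2 / b" using assms(2)
    by (simp add: power2_eq_square field_simps)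
  hence "k * (2 * w * h) \<le> k * (b * w^2 + h^2 / b)" using assms(1) by (rule mult_left_mono)
  thus ?thesis by (simp add: field_simps)
qed

lemma main_bound:
  fixes W :: "'a \<Rightarrow> 'i \<Rightarrow> 'c \<Rightarrow> complex" and mu :: "'r \<Rightarrow> 'a \<Rightarrow> 'c \<Rightarrow> real" and kap :: "'c \<Rightarrow> real"
  assumes fin: "finite I" "finite R" "finite A" "finite C"
    and kpos: "\<And>c. c\<in>C \<Longrightarrow> kap c \<ge> 0"
    and Wb: "\<And>c. c\<in>C \<Longrightarrow> (\<Sum>i\<in>I. \<Sum>a\<in>A. (cmod (W a i c))^2) \<le> 1"
    and orth: "\<And>a r r'. a\<in>A \<Longrightarrow> r\<in>R \<Longrightarrow> r'\<in>R \<Longrightarrow>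
        (\<Sum>c\<in>C. kap c * mu r a c * mu r' a c) = (if r = r' then w r a else 0)"
    and wsum: "\<And>r. r\<in>R \<Longrightarrow> (\<Sum>a\<in>A. w r a) = \<beta>"
    and ksum: "(\<Sum>c\<in>C. kap c) \<le> K0"
    and bpos: "\<beta> > 0"
  shows "(\<Sum>i\<in>I. \<Sum>r\<in>R. (cmod (\<Sum>a\<in>A. \<Sum>c\<in>C. W a i c * of_real (kap c * mu r a c)))^2) \<le> K0 * \<beta>"
proof -
  define T where "T i r = (\<Sum>a\<in>A. \<Sum>c\<in>C. W a i c * of_real (kap c * mu r a c))" for i r
  define H where "H i a c = (\<Sum>r\<in>R. cnj (T i r) * of_real (mu r a c))" for i a c
  define N where "N = (\<Sum>i\<in>I. \<Sum>r\<in>R. (cmod (T i r))^2)"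
  have eq1: "complex_of_real N = (\<Sum>i\<in>I. \<Sum>a\<in>A. \<Sum>c\<in>C. W a i c * of_real (kap c) * H i a c)"
  proof -
    have pt: "complex_of_real ((cmod (T i r))^2) = (\<Sum>a\<in>A. \<Sum>c\<in>C. W a i c * of_real (kap c * mu r a c)) * cnj (T i r)" for i r
      unfolding complex_norm_square by (rule arg_cong[where f="\<lambda>z. z * cnj (T i r)"]) (simp add: T_def)
    have "complex_of_real N = (\<Sum>i\<in>I. \<Sum>r\<in>R. (\<Sum>a\<in>A. \<Sum>c\<in>C. W a i c * of_real (kap c * mu r a c)) * cnj (T i r))"
      unfolding N_def of_real_sum pt ..
    also have "\<dots> = (\<Sum>i\<in>I. \<Sum>a\<in>A. \<Sum>c\<in>C. W a i c * of_real (kap c) * H i a c)"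
      unfolding H_def by (simp add: sum_distrib_left sum_distrib_right sum.swap[where A=R] mult_ac)
    finally show ?thesis .
  qed
  have N0: "N \<ge> 0" unfolding N_def by (intro sum_nonneg) simp
  have step1: "N \<le> (\<Sum>i\<in>I. \<Sum>a\<in>A. \<Sum>c\<in>C. kap c * cmod (W a i c) * cmod (H i a c))"
  proof -
    have "N = cmod (complex_of_real N)" using N0 by simp
    also have "\<dots> \<le> (\<Sum>i\<in>I. \<Sum>a\<in>A. \<Sum>c\<in>C. cmod (W a i c * of_real (kap c) * H i a c))"
      unfolding eq1
      by (rule order.trans[OF norm_sum sum_mono], rule order.trans[OF norm_sum sum_mono], rule norm_sum)
    also have "\<dots> = (\<Sum>i\<in>I. \<Sum>a\<in>A. \<Sum>c\<in>C. kap c * cmod (W a i c) * cmod (H i a c))"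
      by (intro sum.cong refl) (simp add: norm_mult kpos abs_of_nonneg)
    finally show ?thesis .
  qed
  have step2: "(\<Sum>i\<in>I. \<Sum>a\<in>A. \<Sum>c\<in>C. kap c * cmod (W a i c) * cmod (H i a c))
     \<le> (\<beta> * (\<Sum>i\<in>I. \<Sum>a\<in>A. \<Sum>c\<in>C. kap c * (cmod (W a i c))^2) + (\<Sum>i\<in>I. \<Sum>a\<in>A. \<Sum>c\<in>C. kap c * (cmod (H i a c))^2) / \<beta>) / 2"
  proof -
    have "(\<Sum>i\<in>I. \<Sum>a\<in>A. \<Sum>c\<in>C. kap c * cmod (W a i c) * cmod (H i a c))
      \<le> (\<Sum>i\<in>I. \<Sum>a\<in>A. \<Sum>c\<in>C. (\<beta> * (kap c * (cmod (W a i c))^2) + (kap c * (cmod (H i a c))^2) / \<beta>) / 2)"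
      by (intro sum_mono amgm_pt kpos bpos)
    also have "\<dots> = (\<beta> * (\<Sum>i\<in>I. \<Sum>a\<in>A. \<Sum>c\<in>C. kap c * (cmod (W a i c))^2) + (\<Sum>i\<in>I. \<Sum>a\<in>A. \<Sum>c\<in>C. kap c * (cmod (H i a c))^2) / \<beta>) / 2"
      by (simp add: sum.distrib sum_divide_distrib sum_distrib_left add_divide_distrib)
    finally show ?thesis .
  qed
  have step3: "(\<Sum>i\<in>I. \<Sum>a\<in>A. \<Sum>c\<in>C. kap c * (cmod (W a i c))^2) \<le> K0"
  proof -
    have "(\<Sum>i\<in>I. \<Sum>a\<in>A. \<Sum>c\<in>C. kap c * (cmod (W a i c))^2) = (\<Sum>c\<in>C. kap c * (\<Sum>i\<in>I. \<Sum>a\<in>A. (cmod (W a i c))^2))"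
      by (simp add: sum_distrib_left sum.swap[where B=C])
    also have "\<dots> \<le> (\<Sum>c\<in>C. kap c * 1)"
      by (intro sum_mono mult_left_mono Wb kpos)
    also have "\<dots> \<le> K0" using ksum by simp
    finally show ?thesis .
  qed
  have step4: "(\<Sum>c\<in>C. kap c * (cmod (H i a c))^2) = (\<Sum>r\<in>R. (cmod (T i r))^2 * w r a)" if "a \<in> A" for i a
  proof -
    have "complex_of_real (\<Sum>c\<in>C. kap c * (cmod (H i a c))^2) = (\<Sum>c\<in>C. of_real (kap c) * (H i a c * cnj (H i a c)))"
      by (simp only: of_real_sum of_real_mult complex_norm_square)
    also have "\<dots> = (\<Sum>r\<in>R. \<Sum>r'\<in>R. cnj (T i r) * T i r' * of_real (\<Sum>c\<in>C. kap c * mu r a c * mu r' a c))"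
      unfolding H_def by (simp add: sum_product cnj_sum sum_distrib_left sum.swap[where A=C] mult_ac)
    also have "\<dots> = (\<Sum>r\<in>R. \<Sum>r'\<in>R. (if r = r' then cnj (T i r) * T i r' * of_real (w r a) else 0))"
      by (intro sum.cong refl) (simp add: orth that)
    also have "\<dots> = (\<Sum>r\<in>R. cnj (T i r) * T i r * of_real (w r a))"
      by (simp add: fin)
    also have "\<dots> = complex_of_real (\<Sum>r\<in>R. (cmod (T i r))^2 * w r a)"
      by (simp only: of_real_sum of_real_mult complex_norm_square) (simp add: mult_ac)
    finally show ?thesis by (simp only: of_real_eq_iff)
  qed
  have step5: "(\<Sum>i\<in>I. \<Sum>a\<in>A. \<Sum>c\<in>C. kap c * (cmod (H i a c))^2) = \<beta> * N"
  proof -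
    have "(\<Sum>i\<in>I. \<Sum>a\<in>A. \<Sum>c\<in>C. kap c * (cmod (H i a c))^2) = (\<Sum>i\<in>I. \<Sum>a\<in>A. \<Sum>r\<in>R. (cmod (T i r))^2 * w r a)"
      by (intro sum.cong refl step4)
    also have "\<dots> = (\<Sum>i\<in>I. \<Sum>r\<in>R. (cmod (T i r))^2 * (\<Sum>a\<in>A. w r a))"
      by (simp add: sum_distrib_left sum.swap[where A=A])
    also have "\<dots> = (\<Sum>i\<in>I. \<Sum>r\<in>R. (cmod (T i r))^2 * \<beta>)"
      by (intro sum.cong refl) (simp add: wsum)
    also have "\<dots> = \<beta> * N" unfolding N_def by (simp add: sum_distrib_left sum_distrib_right mult_ac)
    finally show ?thesis .
  qed
  have "N \<le> (\<beta> * K0 + \<beta> * N / \<beta>) / 2"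
    using step1 step2 step3 step5 bpos
    by (smt (verit, best) divide_right_mono mult_left_mono)
  hence "N \<le> \<beta> * K0" using bpos by simp
  thus ?thesis unfolding N_def T_def by (simp add: mult_ac)
qed



lemma completeness:
  fixes f :: "'i \<Rightarrow> 'c \<Rightarrow> complex"
  assumes finI: "finite I" and finC: "finite C" and card: "card I = card C"
    and orth: "\<And>i j. i\<in>I \<Longrightarrow> j\<in>I \<Longrightarrow> (\<Sum>c\<in>C. cnj (f i c) * f j c) = (if i = j then 1 else 0)"
    and cC: "c \<in> C" and c'C: "c' \<in> C"
  shows "(\<Sum>i\<in>I. f i c * cnj (f i c')) = (if c = c' then 1 else 0)"
proof -
  define P where "P u v = (\<Sum>i\<in>I. f i u * cnj (f i v))" for u v
  have herm: "P v u = cnj (P u v)" for u v unfolding P_def by (simp add: cnj_sum mult.commute)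
  have idem: "(\<Sum>w\<in>C. P u w * P w v) = P u v" for u v
  proof -
    have "(\<Sum>w\<in>C. P u w * P w v) = (\<Sum>i\<in>I. \<Sum>j\<in>I. f i u * cnj (f j v) * (\<Sum>w\<in>C. cnj (f i w) * f j w))"
      unfolding P_def by (simp add: sum_product sum_distrib_left sum.swap[where A=C] mult_ac)
    also have "\<dots> = (\<Sum>i\<in>I. \<Sum>j\<in>I. (if i = j then f i u * cnj (f j v) else 0))"
      by (intro sum.cong refl) (simp add: orth)
    also have "\<dots> = P u v" unfolding P_def by (simp add: finI)
    finally show ?thesis .
  qed
  define p where "p u = (\<Sum>i\<in>I. (cmod (f i u))^2)" for u
  have Pp: "P u u = complex_of_real (p u)" for u
    unfolding P_def p_def by (simp only: of_real_sum complex_norm_square)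
  have p0: "p u \<ge> 0" for u unfolding p_def by (intro sum_nonneg) simp
  have pq: "complex_of_real (p u) = complex_of_real (\<Sum>w\<in>C. (cmod (P u w))^2)" if "u \<in> C" for u
  proof -
    have "complex_of_real (p u) = (\<Sum>w\<in>C. P u w * P w u)" using idem[of u u] Pp by simp
    also have "\<dots> = (\<Sum>w\<in>C. P u w * cnj (P u w))" by (rule sum.cong[OF refl]) (metis herm)
    also have "\<dots> = complex_of_real (\<Sum>w\<in>C. (cmod (P u w))^2)" by (simp only: of_real_sum complex_norm_square)
    finally show ?thesis .
  qed
  hence pq': "p u = (\<Sum>w\<in>C. (cmod (P u w))^2)" if "u \<in> C" for u using that of_real_eq_iff by blast
  have ple1: "p u \<le> 1" if "u \<in> C" for u
  proof -
    have "(cmod (P u u))^2 \<le> (\<Sum>w\<in>C. (cmod (P u w))^2)"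
      using that finC by (intro member_le_sum) auto
    moreover have "cmod (P u u) = p u" using p0[of u] by (simp add: Pp)
    ultimately have "(p u)^2 \<le> p u" using pq'[OF that] by metis
    show ?thesis
    proof (rule ccontr)
      assume "\<not> p u \<le> 1"
      hence "p u * 1 < p u * p u" by (intro mult_strict_left_mono) auto
      thus False using \<open>(p u)^2 \<le> p u\<close> by (simp add: power2_eq_square)
    qed
  qed
  have psum: "(\<Sum>u\<in>C. p u) = real (card C)"
  proof -
    have "(\<Sum>u\<in>C. p u) = (\<Sum>i\<in>I. \<Sum>u\<in>C. (cmod (f i u))^2)" unfolding p_def by (rule sum.swap)
    also have "\<dots> = (\<Sum>i\<in>I. 1)"
    proof (intro sum.cong refl)
      fix i assume "i \<in> I"
      have "complex_of_real (\<Sum>u\<in>C. (cmod (f i u))^2) = (\<Sum>u\<in>C. cnj (f i u) * f i u)"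
        by (simp only: of_real_sum complex_norm_square mult.commute)
      also have "\<dots> = 1" using orth[OF \<open>i\<in>I\<close> \<open>i\<in>I\<close>] by simp
      finally show "(\<Sum>u\<in>C. (cmod (f i u))^2) = 1" by (metis of_real_eq_1_iff)
    qed
    also have "\<dots> = real (card C)" using card by simp
    finally show ?thesis .
  qed
  have p1: "p u = 1" if "u \<in> C" for u
  proof -
    have "(\<Sum>v\<in>C. 1 - p v) = 0" using psum by (simp add: sum_subtractf)
    moreover have "\<forall>v\<in>C. 0 \<le> 1 - p v" using ple1 by simp
    ultimately have "\<forall>v\<in>C. 1 - p v = 0" by (subst (asm) sum_nonneg_eq_0_iff[OF finC]) auto
    thus ?thesis using that by simp
  qed
  show ?thesis
  proof (cases "c = c'")
    case True
    thus ?thesis using Pp[of c] p1[OF cC] unfolding P_def by simp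
  next
    case False
    have "(\<Sum>w\<in>C. (cmod (P c w))^2) = 1" using pq'[OF cC] p1[OF cC] by simp
    moreover have "(\<Sum>w\<in>C. (cmod (P c w))^2) = (cmod (P c c))^2 + (\<Sum>w\<in>C-{c}. (cmod (P c w))^2)"
      by (rule sum.remove[OF finC cC])
    moreover have "(cmod (P c c))^2 = 1" using Pp[of c] p1[OF cC] by simp
    ultimately have "(\<Sum>w\<in>C-{c}. (cmod (P c w))^2) = 0" by simp
    hence "\<forall>w\<in>C-{c}. (cmod (P c w))^2 = 0" using finC by (subst (asm) sum_nonneg_eq_0_iff) auto
    hence "P c c' = 0" using False c'C by simp
    thus ?thesis using False unfolding P_def by simp
  qed
qed




definition kp :: "nat \<Rightarrow> real \<Rightarrow> real" where "kp d x = cos (alpha_ang d x)"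
definition km :: "nat \<Rightarrow> real \<Rightarrow> real" where
  "km d x = sqrt 2 * (sin (alpha_ang d x) / sqrt (real d - 1)) * sin (theta_ang d x)"

lemma Psi_eq:
  assumes d2: "d \<ge> 2" and x1: "-1 \<le> x" and x2: "x \<le> 1" and r: "r \<in> {1..d}" and a: "a \<in> {1..d}"
  shows "Psi d x r a c = complex_of_real (kap (kp d x) (km d x) c * mr r a c)"
proof -
  have t: "cos (alpha_ang d x) = sqrt 2 * (sin (alpha_ang d x) / sqrt (real d - 1)) * cos (theta_ang d x)"
    using trig[OF d2 x1 x2] by blast
  show ?thesis
  proof (cases "a = r")
    case True thus ?thesis by (simp add: Psi_def mr_def kap_def kp_def ind_def basis_vec_def)
  next
    case False
    show ?thesis
    proof (cases "a < r")
      case True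
      thus ?thesis using False a r t
        by (auto simp: Psi_def Let_def mr_def kap_def kp_def km_def ind_def basis_vec_def)
    next
      case False2: False
      thus ?thesis using False a r t
        by (auto simp: Psi_def Let_def mr_def kap_def kp_def km_def ind_def basis_vec_def)
    qed
  qed
qed

lemma card_CLabels: "card (CLabels d) = d * d"
proof -
  define g where "g p = (if fst p \<le> snd p then (True, fst p, snd p) else (False, snd p, fst p))" for p :: "nat \<times> nat"
  have "bij_betw g ({1..d} \<times> {1..d}) (CLabels d)"
  proof (rule bij_betwI')
    fix p q assume "p \<in> {1..d} \<times> {1..d}" "q \<in> {1..d} \<times> {1..d}"
    thus "(g p = g q) = (p = q)" unfolding g_def by (cases p, cases q) (auto split: if_splits)
  next
    fix p assume "p \<in> {1..d} \<times> {1..d}"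
    thus "g p \<in> CLabels d" unfolding g_def CLabels_def by (cases p) auto
  next
    fix y assume "y \<in> CLabels d"
    hence "\<exists>b k l. y = (b, k, l) \<and> 1 \<le> k \<and> k \<le> l \<and> l \<le> d \<and> (b = False \<longrightarrow> k < l)"
      unfolding CLabels_def by auto
    then obtain b k l where y: "y = (b, k, l) \<and> 1 \<le> k \<and> k \<le> l \<and> l \<le> d \<and> (b = False \<longrightarrow> k < l)"
      by blast
    show "\<exists>p\<in>{1..d} \<times> {1..d}. y = g p"
    proof (cases b)
      case True thus ?thesis using y by (intro bexI[of _ "(k,l)"]) (auto simp: g_def)
    next
      case False thus ?thesis using y by (intro bexI[of _ "(l,k)"]) (auto simp: g_def)
    qed
  qed
  hence "card ({1..d} \<times> {1..d}) = card (CLabels d)" by (rule bij_betw_same_card)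
  thus ?thesis by simp
qed

lemma idx_range: "(a::nat) \<in> {1..d} \<Longrightarrow> i \<in> {1..d} \<Longrightarrow> a + (i - 1) * d \<in> {1..d^2}"
proof -
  assume a: "a \<in> {1..d}" and i: "i \<in> {1..d}"
  have "(i - 1) * d \<le> (d - 1) * d" by (rule mult_le_mono1) (use i in auto)
  hence "a + (i - 1) * d \<le> d + (d - 1) * d" using a by (intro add_le_mono) auto
  also have "\<dots> = d^2" using a by (cases d) (auto simp: power2_eq_square)
  finally show ?thesis using a by simp
qed

lemma idx_lt:
  fixes a i b j d :: nat
  assumes "a \<in> {1..d}" "i \<in> {1..d}" "b \<in> {1..d}" "j \<in> {1..d}" "i < j"
  shows "a + (i - 1) * d < b + (j - 1) * d"
proof -
  have "i \<le> j - 1" using assms(5) by simp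
  hence "i * d \<le> (j - 1) * d" by (rule mult_le_mono1)
  moreover have "i * d = (i - 1) * d + d" using assms(2) by (cases i) auto
  ultimately show ?thesis using assms(1,3) by simp
qed

lemma idx_inj:
  fixes a i b j d :: nat
  assumes "a \<in> {1..d}" "i \<in> {1..d}" "b \<in> {1..d}" "j \<in> {1..d}" "a + (i - 1) * d = b + (j - 1) * d"
  shows "a = b \<and> i = j"
proof -
  have "i = j"
  proof (rule ccontr)
    assume "i \<noteq> j"
    hence "i < j \<or> j < i" by linarith
    thus False using idx_lt[of a d i b j] idx_lt[of b d j a i] assms by auto
  qed
  thus ?thesis using assms by simp
qed

definition idx :: "nat \<Rightarrow> nat \<times> nat \<Rightarrow> nat" where "idx d p = fst p + (snd p - 1) * d"

lemma e_orth:
  assumes "onb_C d e" "p \<in> {1..d} \<times> {1..d}" "q \<in> {1..d} \<times> {1..d}"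
  shows "(\<Sum>c\<in>CLabels d. cnj (e (idx d p) c) * e (idx d q) c) = (if p = q then 1 else 0)"
proof -
  have r: "idx d p \<in> {1..d^2}" "idx d q \<in> {1..d^2}" using assms(2,3) idx_range unfolding idx_def by auto
  have "idx d p = idx d q \<longleftrightarrow> p = q"
    using assms(2,3) idx_inj[of "fst p" d "snd p" "fst q" "snd q"] unfolding idx_def by (cases p, cases q) auto
  thus ?thesis using assms(1) r unfolding onb_C_def by auto
qed

lemma e_comp:
  assumes "onb_C d e" "c \<in> CLabels d" "c' \<in> CLabels d"
  shows "(\<Sum>p\<in>{1..d} \<times> {1..d}. e (idx d p) c * cnj (e (idx d p) c')) = (if c = c' then 1 else 0)"
  by (rule completeness[where f="\<lambda>p. e (idx d p)"]) (use assms e_orth card_CLabels finite_CLabels in auto)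

lemma kap11: "kap 1 1 c = 1" unfolding kap_def by simp

lemma mu_orth:
  assumes "p \<in> {1..d} \<times> {1..d}" "q \<in> {1..d} \<times> {1..d}"
  shows "(\<Sum>c\<in>CLabels d. cnj (complex_of_real (mr (snd p) (fst p) c)) * complex_of_real (mr (snd q) (fst q) c)) = (if p = q then 1 else 0)"
proof -
  have "(\<Sum>c\<in>CLabels d. kap 1 1 c * mr (snd p) (fst p) c * mr (snd q) (fst q) c) = (if p = q then 1 else 0)"
    using assms by (subst L2) (auto simp: prod_eq_iff)
  hence "(\<Sum>c\<in>CLabels d. mr (snd p) (fst p) c * mr (snd q) (fst q) c) = (if p = q then 1 else 0)"
    by (simp add: kap11)
  hence "complex_of_real (\<Sum>c\<in>CLabels d. mr (snd p) (fst p) c * mr (snd q) (fst q) c) = (if p = q then 1 else 0)"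
    by simp
  thus ?thesis by simp
qed

lemma mu_comp:
  assumes "c \<in> CLabels d" "c' \<in> CLabels d"
  shows "(\<Sum>p\<in>{1..d} \<times> {1..d}. complex_of_real (mr (snd p) (fst p) c) * cnj (complex_of_real (mr (snd p) (fst p) c'))) = (if c = c' then 1 else 0)"
  by (rule completeness[where f="\<lambda>p c. complex_of_real (mr (snd p) (fst p) c)"]) (use assms mu_orth card_CLabels finite_CLabels in auto)

definition Wf :: "nat \<Rightarrow> (label \<Rightarrow> label \<Rightarrow> complex) \<Rightarrow> (nat \<Rightarrow> label \<Rightarrow> complex) \<Rightarrow> nat \<Rightarrow> nat \<Rightarrow> label \<Rightarrow> complex" where
  "Wf d V e a i c = (\<Sum>c'\<in>CLabels d. cnj (e (idx d (a, i)) c') * V c' c)"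

definition Tf :: "nat \<Rightarrow> real \<Rightarrow> (label \<Rightarrow> label \<Rightarrow> complex) \<Rightarrow> (nat \<Rightarrow> label \<Rightarrow> complex) \<Rightarrow> nat \<Rightarrow> nat \<Rightarrow> complex" where
  "Tf d x V e i r = (\<Sum>a\<in>{1..d}. \<Sum>c\<in>CLabels d. Wf d V e a i c * of_real (kap (kp d x) (km d x) c * mr r a c))"

lemma rho_form: "rhoAC d x = (\<lambda>p q. (1 / of_nat d) * (\<Sum>r\<in>{1..d}. Psi d x r (fst p) (snd p) * cnj (Psi d x r (fst q) (snd q))))"
  by (rule ext)+ (simp add: rhoAC_def)

lemma Zform:
  assumes d2: "d \<ge> 2" and x1: "-1 \<le> x" and x2: "x \<le> 1" and r: "r \<in> {1..d}"
  shows "(\<Sum>p\<in>{1..d} \<times> CLabels d. cnj (psi_max d e i (fst p) (snd p)) * (\<Sum>c1\<in>CLabels d. V (snd p) c1 * Psi d x r (fst p) c1))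
     = complex_of_real (1 / sqrt (real d)) * Tf d x V e i r"
proof -
  let ?K = "\<lambda>c. kap (kp d x) (km d x) c"
  have "(\<Sum>p\<in>{1..d} \<times> CLabels d. cnj (psi_max d e i (fst p) (snd p)) * (\<Sum>c1\<in>CLabels d. V (snd p) c1 * Psi d x r (fst p) c1))
     = (\<Sum>a\<in>{1..d}. \<Sum>c'\<in>CLabels d. cnj (psi_max d e i a c') * (\<Sum>c1\<in>CLabels d. V c' c1 * Psi d x r a c1))"
    by (simp add: sum.cartesian_product split_def)
  also have "\<dots> = (\<Sum>a\<in>{1..d}. \<Sum>c'\<in>CLabels d. complex_of_real (1 / sqrt (real d)) * cnj (e (idx d (a, i)) c') * (\<Sum>c1\<in>CLabels d. V c' c1 * complex_of_real (?K c1 * mr r a c1)))"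
    by (intro sum.cong refl) (simp add: psi_max_def idx_def Psi_eq[OF d2 x1 x2 r])
  also have "\<dots> = (\<Sum>a\<in>{1..d}. complex_of_real (1 / sqrt (real d)) * (\<Sum>c'\<in>CLabels d. \<Sum>c1\<in>CLabels d. cnj (e (idx d (a, i)) c') * V c' c1 * complex_of_real (?K c1 * mr r a c1)))"
    by (simp add: sum_distrib_left mult_ac)
  also have "\<dots> = (\<Sum>a\<in>{1..d}. complex_of_real (1 / sqrt (real d)) * (\<Sum>c1\<in>CLabels d. \<Sum>c'\<in>CLabels d. cnj (e (idx d (a, i)) c') * V c' c1 * complex_of_real (?K c1 * mr r a c1)))"
    apply (rule sum.cong[OF refl])
    apply (rule arg_cong[where f="\<lambda>z. _ * z"])
    by (rule sum.swap)
  also have "\<dots> = complex_of_real (1 / sqrt (real d)) * Tf d x V e i r"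
    unfolding Tf_def Wf_def
    by (simp add: sum_distrib_left sum_distrib_right mult_ac)
  finally show ?thesis .
qed

lemma obj:
  assumes d2: "d \<ge> 2" and x1: "-1 \<le> x" and x2: "x \<le> 1"
  shows "(\<Sum>i\<in>{1..d}. expect d (conj_IV d V (rhoAC d x)) (psi_max d e i))
     = complex_of_real ((\<Sum>i\<in>{1..d}. \<Sum>r\<in>{1..d}. (cmod (Tf d x V e i r))^2) / (real d)^2)"
proof -
  have dpos: "real d > 0" using d2 by simp
  have sq: "(complex_of_real (sqrt (real d)))^2 = complex_of_nat d"
    by (metis of_real_of_nat_eq of_real_power real_sqrt_pow2 of_nat_0_le_iff)
  have each: "expect d (conj_IV d V (rhoAC d x)) (psi_max d e i)
      = complex_of_real ((\<Sum>r\<in>{1..d}. (cmod (Tf d x V e i r))^2) / (real d)^2)" for i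
  proof -
    have "expect d (conj_IV d V (rhoAC d x)) (psi_max d e i)
       = (1 / of_nat d) * (\<Sum>r\<in>{1..d}. (complex_of_real (1 / sqrt (real d)) * Tf d x V e i r) * cnj (complex_of_real (1 / sqrt (real d)) * Tf d x V e i r))"
      unfolding rho_form
      apply (subst expect_conj, simp)
      apply (rule arg_cong[where f="\<lambda>z. _ * z"])
      apply (rule sum.cong[OF refl])
      by (simp only: Zform[OF d2 x1 x2])
    also have "\<dots> = (1 / of_nat d) * (\<Sum>r\<in>{1..d}. complex_of_real (1 / real d) * (Tf d x V e i r * cnj (Tf d x V e i r)))"
      using dpos sq by (simp add: mult_ac power2_eq_square[symmetric] flip: of_real_mult)
    also have "\<dots> = complex_of_real ((\<Sum>r\<in>{1..d}. (cmod (Tf d x V e i r))^2) / (real d)^2)"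
      by (simp only: complex_norm_square[symmetric] of_real_mult[symmetric] of_real_sum[symmetric] sum_distrib_left[symmetric])
         (simp add: power2_eq_square)
    finally show ?thesis .
  qed
  show ?thesis by (simp add: each sum_divide_distrib flip: of_real_sum)
qed

lemma sum_DD: "(\<Sum>i\<in>B. \<Sum>a\<in>A. f a i) = (\<Sum>p\<in>A \<times> B. f (fst p) (snd p))"
  by (subst sum.swap) (simp add: sum.cartesian_product split_def)

lemma Wb:
  assumes U: "unitary_C d V" and e: "onb_C d e" and c: "c \<in> CLabels d"
  shows "(\<Sum>i\<in>{1..d}. \<Sum>a\<in>{1..d}. (cmod (Wf d V e a i c))^2) \<le> 1"
proof -
  let ?D = "{1..d} \<times> {1..d}"
  have "complex_of_real (\<Sum>i\<in>{1..d}. \<Sum>a\<in>{1..d}. (cmod (Wf d V e a i c))^2)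
      = (\<Sum>p\<in>?D. Wf d V e (fst p) (snd p) c * cnj (Wf d V e (fst p) (snd p) c))"
    by (simp only: sum_DD of_real_sum complex_norm_square)
  also have "\<dots> = (\<Sum>c''\<in>CLabels d. \<Sum>c'\<in>CLabels d. V c' c * cnj (V c'' c) * (\<Sum>p\<in>?D. e (idx d p) c'' * cnj (e (idx d p) c')))"
    unfolding Wf_def by (simp add: sum_product cnj_sum sum_distrib_left sum.swap[where A="{Suc 0..d} \<times> {Suc 0..d}"] mult_ac)
  also have "\<dots> = (\<Sum>c''\<in>CLabels d. \<Sum>c'\<in>CLabels d. (if c'' = c' then V c' c * cnj (V c'' c) else 0))"
    by (intro sum.cong refl) (simp only: e_comp[OF e], simp)
  also have "\<dots> = (\<Sum>c'\<in>CLabels d. cnj (V c' c) * V c' c)"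
    by (simp add: finite_CLabels mult.commute)
  also have "\<dots> = 1" using U c unfolding unitary_C_def by simp
  finally have "(\<Sum>i\<in>{1..d}. \<Sum>a\<in>{1..d}. (cmod (Wf d V e a i c))^2) = 1" by (simp only: of_real_eq_1_iff)
  thus ?thesis by simp
qed

definition beta :: "nat \<Rightarrow> real \<Rightarrow> real" where
  "beta d x = kp d x + (real d - 1) * (kp d x + km d x) / 2"

definition wgt :: "nat \<Rightarrow> real \<Rightarrow> nat \<Rightarrow> nat \<Rightarrow> real" where
  "wgt d x r a = (if r = a then kp d x else (kp d x + km d x) / 2)"

lemma wsum: "r \<in> {1..d} \<Longrightarrow> (\<Sum>a\<in>{1..d}. wgt d x r a) = beta d x"
proof -
  assume r: "r \<in> {1..d}"
  have "(\<Sum>a\<in>{1..d}. wgt d x r a) = (\<Sum>a\<in>{1..d}. (kp d x + km d x) / 2 + (if a = r then kp d x - (kp d x + km d x) / 2 else 0))"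
    unfolding wgt_def by (intro sum.cong refl) auto
  also have "\<dots> = real d * ((kp d x + km d x) / 2) + (kp d x - (kp d x + km d x) / 2)"
    using r by (simp add: sum.distrib)
  also have "\<dots> = beta d x" unfolding beta_def by (simp add: field_simps)
  finally show ?thesis .
qed

lemma orth_w:
  assumes "a \<in> {1..d}" "r \<in> {1..d}" "r' \<in> {1..d}"
  shows "(\<Sum>c\<in>CLabels d. kap (kp d x) (km d x) c * mr r a c * mr r' a c) = (if r = r' then wgt d x r a else 0)"
  using assms by (subst L2) (auto simp: wgt_def)

lemma ksum_eq: "(\<Sum>c\<in>CLabels d. kap (kp d x) (km d x) c) = real d * beta d x"
proof -
  let ?D = "{1..d} \<times> {1..d}"
  let ?K = "kap (kp d x) (km d x)"
  have one: "(\<Sum>p\<in>?D. mr (snd p) (fst p) c * mr (snd p) (fst p) c) = 1" if "c \<in> CLabels d" for c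
  proof -
    have "complex_of_real (\<Sum>p\<in>?D. mr (snd p) (fst p) c * mr (snd p) (fst p) c) = 1"
      using mu_comp[OF that that] by simp
    thus ?thesis by (simp only: of_real_eq_1_iff)
  qed
  have "(\<Sum>c\<in>CLabels d. ?K c) = (\<Sum>c\<in>CLabels d. ?K c * (\<Sum>p\<in>?D. mr (snd p) (fst p) c * mr (snd p) (fst p) c))"
    by (intro sum.cong refl) (simp only: one mult_1_right)
  also have "\<dots> = (\<Sum>p\<in>?D. \<Sum>c\<in>CLabels d. ?K c * mr (snd p) (fst p) c * mr (snd p) (fst p) c)"
    by (simp add: sum_distrib_left sum.swap[where A="CLabels d"] mult_ac)
  also have "\<dots> = (\<Sum>p\<in>?D. wgt d x (snd p) (fst p))"
    by (intro sum.cong refl) (auto simp: orth_w)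
  also have "\<dots> = (\<Sum>i\<in>{1..d}. \<Sum>a\<in>{1..d}. wgt d x i a)"
    by (simp add: sum_DD)
  also have "\<dots> = (\<Sum>i\<in>{1..d}. beta d x)" by (intro sum.cong refl) (simp only: wsum)
  finally show ?thesis by simp
qed

lemma kappos:
  assumes d2: "d \<ge> 2" and x1: "-1 \<le> x" and x2: "x \<le> 1"
  shows "kap (kp d x) (km d x) c \<ge> 0" and "kp d x \<ge> 0" and "km d x \<ge> 0"
proof -
  show k1: "kp d x \<ge> 0" unfolding kp_def using trig[OF d2 x1 x2] by blast
  show k2: "km d x \<ge> 0" unfolding km_def using trig[OF d2 x1 x2] d2 by (intro mult_nonneg_nonneg divide_nonneg_nonneg) auto
  show "kap (kp d x) (km d x) c \<ge> 0" unfolding kap_def using k1 k2 by simp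
qed

lemma betapos:
  assumes d2: "d \<ge> 2" and x1: "-1 \<le> x" and x2: "x \<le> 1"
  shows "beta d x > 0"
proof (cases "kp d x = 0")
  case True
  hence "sin (alpha_ang d x) = 1 \<and> sin (theta_ang d x) = 1" using trig(5)[OF d2 x1 x2] unfolding kp_def by blast
  hence "km d x = sqrt 2 / sqrt (real d - 1)" unfolding km_def by simp
  moreover have "sqrt (real d - 1) > 0" using d2 by simp
  ultimately have "km d x > 0" by simp
  moreover have "real d - 1 > 0" using d2 by simp
  ultimately show ?thesis unfolding beta_def using True by simp
next
  case False
  hence "kp d x > 0" using kappos[OF d2 x1 x2] by simp
  moreover have "(real d - 1) * (kp d x + km d x) / 2 \<ge> 0" using kappos[OF d2 x1 x2] d2 by simp
  ultimately show ?thesis unfolding beta_def by simp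
qed

lemma upper:
  assumes d2: "d \<ge> 2" and x1: "-1 \<le> x" and x2: "x \<le> 1" and U: "unitary_C d V" and e: "onb_C d e"
  shows "(\<Sum>i\<in>{1..d}. \<Sum>r\<in>{1..d}. (cmod (Tf d x V e i r))^2) \<le> real d * (beta d x)^2"
proof -
  have "(\<Sum>i\<in>{1..d}. \<Sum>r\<in>{1..d}. (cmod (Tf d x V e i r))^2) \<le> (\<Sum>c\<in>CLabels d. kap (kp d x) (km d x) c) * beta d x"
    unfolding Tf_def
    apply (rule main_bound[where w="wgt d x"])
    subgoal by simp
    subgoal by simp
    subgoal by simp
    subgoal by (rule finite_CLabels)
    subgoal by (rule kappos[OF d2 x1 x2])
    subgoal by (rule Wb[OF U e])
    subgoal by (simp only: orth_w)
    subgoal by (simp only: wsum)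
    subgoal by (rule order_refl)
    subgoal by (rule betapos[OF d2 x1 x2])
    done
  thus ?thesis by (simp add: ksum_eq power2_eq_square mult_ac)
qed

definition V0 :: "nat \<Rightarrow> (nat \<Rightarrow> label \<Rightarrow> complex) \<Rightarrow> label \<Rightarrow> label \<Rightarrow> complex" where
  "V0 d e c' c = (\<Sum>p\<in>{1..d} \<times> {1..d}. e (idx d p) c' * complex_of_real (mr (snd p) (fst p) c))"

lemma V0_unitary:
  assumes e: "onb_C d e"
  shows "unitary_C d (V0 d e)"
proof -
  let ?D = "{1..d} \<times> {1..d}"
  let ?m = "\<lambda>p c. complex_of_real (mr (snd p) (fst p) c)"
  have col: "(\<Sum>m\<in>CLabels d. cnj (V0 d e m a) * V0 d e m b) = (if a = b then 1 else 0)"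
    if a: "a \<in> CLabels d" and b: "b \<in> CLabels d" for a b
  proof -
    have "(\<Sum>m\<in>CLabels d. cnj (V0 d e m a) * V0 d e m b)
       = (\<Sum>p\<in>?D. \<Sum>q\<in>?D. ?m p a * ?m q b * (\<Sum>m\<in>CLabels d. cnj (e (idx d p) m) * e (idx d q) m))"
      unfolding V0_def by (simp add: sum_product cnj_sum sum_distrib_left sum.swap[where A="CLabels d"] mult_ac)
    also have "\<dots> = (\<Sum>p\<in>?D. \<Sum>q\<in>?D. (if p = q then ?m p a * ?m q b else 0))"
      by (intro sum.cong refl) (simp only: e_orth[OF e], simp)
    also have "\<dots> = (\<Sum>p\<in>?D. ?m p a * cnj (?m p b))" by simp
    also have "\<dots> = (if a = b then 1 else 0)" by (rule mu_comp[OF a b])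
    finally show ?thesis .
  qed
  have row: "(\<Sum>m\<in>CLabels d. V0 d e a m * cnj (V0 d e b m)) = (if a = b then 1 else 0)"
    if a: "a \<in> CLabels d" and b: "b \<in> CLabels d" for a b
  proof -
    have "(\<Sum>m\<in>CLabels d. V0 d e a m * cnj (V0 d e b m))
       = (\<Sum>q\<in>?D. \<Sum>p\<in>?D. e (idx d p) a * cnj (e (idx d q) b) * (\<Sum>m\<in>CLabels d. cnj (?m p m) * ?m q m))"
      unfolding V0_def by (simp add: sum_product cnj_sum sum_distrib_left sum.swap[where A="CLabels d"] mult_ac)
    also have "\<dots> = (\<Sum>q\<in>?D. \<Sum>p\<in>?D. (if p = q then e (idx d p) a * cnj (e (idx d q) b) else 0))"
      by (intro sum.cong refl) (simp only: mu_orth, simp)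
    also have "\<dots> = (\<Sum>p\<in>?D. e (idx d p) a * cnj (e (idx d p) b))" by simp
    also have "\<dots> = (if a = b then 1 else 0)" by (rule e_comp[OF e a b])
    finally show ?thesis .
  qed
  show ?thesis unfolding unitary_C_def using col row by blast
qed

lemma Wf_V0:
  assumes e: "onb_C d e" and a: "a \<in> {1..d}" and i: "i \<in> {1..d}"
  shows "Wf d (V0 d e) e a i c = complex_of_real (mr i a c)"
proof -
  let ?D = "{1..d} \<times> {1..d}"
  have ai: "(a, i) \<in> ?D" using a i by simp
  have "Wf d (V0 d e) e a i c = (\<Sum>q\<in>?D. complex_of_real (mr (snd q) (fst q) c) * (\<Sum>c'\<in>CLabels d. cnj (e (idx d (a, i)) c') * e (idx d q) c'))"
    unfolding Wf_def V0_def by (simp add: sum_distrib_left sum.swap[where A="CLabels d"] mult_ac)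
  also have "\<dots> = (\<Sum>q\<in>?D. (if (a, i) = q then complex_of_real (mr (snd q) (fst q) c) else 0))"
    by (intro sum.cong refl) (simp only: e_orth[OF e ai], simp)
  also have "\<dots> = complex_of_real (mr i a c)" using ai by (simp add: sum.delta)
  finally show ?thesis .
qed

lemma kmu_sum:
  assumes "i \<in> {1..d}" "r \<in> {1..d}"
  shows "(\<Sum>a\<in>{1..d}. \<Sum>c\<in>CLabels d. kap (kp d x) (km d x) c * mr i a c * mr r a c) = (if i = r then beta d x else 0)"
proof -
  have "(\<Sum>a\<in>{1..d}. \<Sum>c\<in>CLabels d. kap (kp d x) (km d x) c * mr i a c * mr r a c) = (\<Sum>a\<in>{1..d}. (if i = r then wgt d x i a else 0))"
    by (intro sum.cong refl) (simp only: orth_w assms)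
  also have "\<dots> = (if i = r then beta d x else 0)"
  proof (cases "i = r")
    case True thus ?thesis using wsum[OF assms(1), of x] by simp
  qed simp
  finally show ?thesis .
qed

lemma Tf_V0:
  assumes e: "onb_C d e" and i: "i \<in> {1..d}" and r: "r \<in> {1..d}"
  shows "Tf d x (V0 d e) e i r = complex_of_real (if i = r then beta d x else 0)"
proof -
  have "Tf d x (V0 d e) e i r = (\<Sum>a\<in>{1..d}. \<Sum>c\<in>CLabels d. complex_of_real (mr i a c) * complex_of_real (kap (kp d x) (km d x) c * mr r a c))"
    unfolding Tf_def by (intro sum.cong refl) (simp only: Wf_V0[OF e _ i])
  also have "\<dots> = complex_of_real (\<Sum>a\<in>{1..d}. \<Sum>c\<in>CLabels d. kap (kp d x) (km d x) c * mr i a c * mr r a c)"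
    by (simp add: mult_ac)
  also have "\<dots> = complex_of_real (if i = r then beta d x else 0)" by (simp only: kmu_sum[OF i r])
  finally show ?thesis .
qed

lemma attain:
  assumes e: "onb_C d e"
  shows "(\<Sum>i\<in>{1..d}. \<Sum>r\<in>{1..d}. (cmod (Tf d x (V0 d e) e i r))^2) = real d * (beta d x)^2"
proof -
  have "(\<Sum>i\<in>{1..d}. \<Sum>r\<in>{1..d}. (cmod (Tf d x (V0 d e) e i r))^2) = (\<Sum>i\<in>{1..d}. \<Sum>r\<in>{1..d}. (if i = r then (beta d x)^2 else 0))"
    by (intro sum.cong refl) (simp add: Tf_V0[OF e])
  also have "\<dots> = real d * (beta d x)^2" by simp
  finally show ?thesis .
qed

lemma expect_plain:
  fixes s :: complex
  assumes fin: "finite R"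
  shows "expect d (\<lambda>p q. s * (\<Sum>r\<in>R. f r (fst p) (snd p) * cnj (f r (fst q) (snd q)))) \<psi>
   = s * (\<Sum>r\<in>R. (\<Sum>p\<in>{1..d} \<times> CLabels d. cnj (\<psi> (fst p) (snd p)) * f r (fst p) (snd p))
       * cnj (\<Sum>p\<in>{1..d} \<times> CLabels d. cnj (\<psi> (fst p) (snd p)) * f r (fst p) (snd p)))"
  unfolding expect_def
  by (simp add: sum_product sum_distrib_left sum_distrib_right cnj_sum sum.swap[where A=R] mult_ac)

lemma rhs:
  assumes d2: "d \<ge> 2" and x1: "-1 \<le> x" and x2: "x \<le> 1"
  shows "(\<Sum>r\<in>{1..d}. expect d (rhoAC d x) (Psi_max d r)) = complex_of_real ((beta d x)^2 / real d)"
proof -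
  have dpos: "real d > 0" using d2 by simp
  have sq2: "complex_of_real (sqrt (real d)) * complex_of_real (sqrt (real d)) = complex_of_nat d"
    by (simp only: of_real_mult[symmetric] real_sqrt_mult_self of_real_of_nat_eq abs_of_nat)
  have Y: "(\<Sum>p\<in>{1..d} \<times> CLabels d. cnj (Psi_max d r (fst p) (snd p)) * Psi d x s (fst p) (snd p))
      = complex_of_real (1 / sqrt (real d) * (if r = s then beta d x else 0))" if r: "r \<in> {1..d}" and s: "s \<in> {1..d}" for r s
  proof -
    have "(\<Sum>p\<in>{1..d} \<times> CLabels d. cnj (Psi_max d r (fst p) (snd p)) * Psi d x s (fst p) (snd p))
       = (\<Sum>a\<in>{1..d}. \<Sum>c\<in>CLabels d. cnj (Psi_max d r a c) * Psi d x s a c)"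
      by (simp add: sum.cartesian_product split_def)
    also have "\<dots> = (\<Sum>a\<in>{1..d}. \<Sum>c\<in>CLabels d. complex_of_real (1 / sqrt (real d) * (kap (kp d x) (km d x) c * mr r a c * mr s a c)))"
      by (intro sum.cong refl) (simp add: Psi_max_def mu_r_eq Psi_eq[OF d2 x1 x2 s] mult_ac)
    also have "\<dots> = complex_of_real (1 / sqrt (real d) * (\<Sum>a\<in>{1..d}. \<Sum>c\<in>CLabels d. kap (kp d x) (km d x) c * mr r a c * mr s a c))"
      by (simp only: of_real_sum sum_distrib_left)
    also have "\<dots> = complex_of_real (1 / sqrt (real d) * (if r = s then beta d x else 0))"
      by (simp only: kmu_sum[OF r s])
    finally show ?thesis .
  qed
  have each: "expect d (rhoAC d x) (Psi_max d r) = complex_of_real ((beta d x)^2 / (real d)^2)" if r: "r \<in> {1..d}" for r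
  proof -
    have "expect d (rhoAC d x) (Psi_max d r) = (1 / of_nat d) * (\<Sum>s\<in>{1..d}.
          complex_of_real (1 / sqrt (real d) * (if r = s then beta d x else 0)) * cnj (complex_of_real (1 / sqrt (real d) * (if r = s then beta d x else 0))))"
      unfolding rho_form
      apply (subst expect_plain, simp)
      apply (rule arg_cong[where f="\<lambda>z. _ * z"])
      apply (rule sum.cong[OF refl])
      by (simp only: Y[OF r])
    also have "\<dots> = (1 / of_nat d) * (\<Sum>s\<in>{1..d}. complex_of_real (if r = s then (beta d x)^2 / real d else 0))"
      using dpos sq2 by (intro arg_cong[where f="\<lambda>z. _ * z"] sum.cong refl) (simp add: power2_eq_square)
    also have "\<dots> = (1 / of_nat d) * complex_of_real ((beta d x)^2 / real d)"
    proof -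
      have h: "(\<Sum>s\<in>{1..d}. (if r = s then (beta d x)^2 / real d else 0)) = (beta d x)^2 / real d" using r by simp
      show ?thesis by (simp only: of_real_sum[symmetric] h)
    qed
    also have "\<dots> = complex_of_real ((beta d x)^2 / (real d)^2)"
      by (simp add: power2_eq_square)
    finally show ?thesis .
  qed
  have "(\<Sum>r\<in>{1..d}. expect d (rhoAC d x) (Psi_max d r)) = (\<Sum>r\<in>{1..d}. complex_of_real ((beta d x)^2 / (real d)^2))"
    by (intro sum.cong refl) (simp only: each)
  also have "\<dots> = complex_of_real ((beta d x)^2 / real d)" using dpos by (simp add: power2_eq_square)
  finally show ?thesis .
qed

theorem lemma1:
  fixes d :: nat and x :: real and e :: "nat \<Rightarrow> label \<Rightarrow> complex"
  assumes "d \<ge> 2" and "-1 \<le> x" and "x \<le> 1" and "onb_C d e"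
  shows "complex_of_real (FEF d e (rhoAC d x))
           = (\<Sum>r\<in>{1..d}. expect d (rhoAC d x) (Psi_max d r))"
proof -
  note d2 = assms(1) and x1 = assms(2) and x2 = assms(3) and e = assms(4)
  have dpos: "real d > 0" using d2 by simp
  define g where "g V = Re (\<Sum>i\<in>{1..d}. expect d (conj_IV d V (rhoAC d x)) (psi_max d e i))" for V
  have gval: "g V = (\<Sum>i\<in>{1..d}. \<Sum>r\<in>{1..d}. (cmod (Tf d x V e i r))^2) / (real d)^2" for V
    unfolding g_def obj[OF d2 x1 x2] by simp
  have ub: "g V \<le> (beta d x)^2 / real d" if "V \<in> {V. unitary_C d V}" for V
  proof -
    have "g V \<le> real d * (beta d x)^2 / (real d)^2"
      unfolding gval using upper[OF d2 x1 x2 _ e, of V] that dpos by (simp add: divide_right_mono)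
    also have "\<dots> = (beta d x)^2 / real d" using dpos by (simp add: power2_eq_square)
    finally show ?thesis .
  qed
  have att: "g (V0 d e) = (beta d x)^2 / real d"
    unfolding gval attain[OF e] using dpos by (simp add: power2_eq_square)
  have "FEF d e (rhoAC d x) = Sup (g ` {V. unitary_C d V})"
    unfolding FEF_def g_def ..
  also have "\<dots> = (beta d x)^2 / real d"
  proof (rule cSup_eq_maximum)
    show "(beta d x)^2 / real d \<in> g ` {V. unitary_C d V}"
      using att V0_unitary[OF e] by (metis image_eqI mem_Collect_eq)
  qed (use ub in auto)
  finally show ?thesis using rhs[OF d2 x1 x2] by simp
qed


end
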